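(* Let $\beta>1$ and $l\in(-1,0]$, put $r=l+1$, and let $T$ be the $(-\beta,l)$-transformation of $[l,r)$. Let $\mathrm{Fin}(-\beta,l)$ be the set of $x\in[l,r)$ whose $(-\beta,l)$-expansion $d(x)$ ends in $0^\omega$ (equivalently, $T^n(x)=0$ for some $n\in\mathbb{N}$). Then $\mathrm{Fin}(-\beta,l)\neq\{0\}$ if and only if $-\frac{1}{\beta}\in[l,r)$ or $\frac{1}{\beta}\in[l,r)$.
   Context: For $\beta>1$ and $l\in(-1,0]$, $r=l+1$, the $(-\beta,l)$-transformation is $T:[l,r)\to[l,r)$, $T(x)=-\beta x-\lfloor -\beta x-l\rfloor$. The $(-\beta,l)$-expansion of $x\in[l,r)$ is the integer sequence $d(x)=x_1x_2x_3\cdots$ with $x_i=\lfloor -\beta T^{i-1}(x)-l\rfloor$ for $i\ge1$; one has $x=\sum_{i\ge1}x_i(-\beta)^{-i}$. *)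

theory Defs
  imports Complex_Main
begin

definition negbeta_T :: "real \<Rightarrow> real \<Rightarrow> real \<Rightarrow> real" where
  "negbeta_T \<beta> l x = - \<beta> * x - of_int \<lfloor>- \<beta> * x - l\<rfloor>"

text \<open>The (-beta,l)-expansion d(x) = x_1 x_2 ..., indexed from 1:
  x_i = floor(-beta T^(i-1)(x) - l).\<close>
definition negbeta_digit :: "real \<Rightarrow> real \<Rightarrow> real \<Rightarrow> nat \<Rightarrow> int" where
  "negbeta_digit \<beta> l x i = \<lfloor>- \<beta> * ((negbeta_T \<beta> l ^^ (i - 1)) x) - l\<rfloor>"

definition negbeta_Fin :: "real \<Rightarrow> real \<Rightarrow> real set" where
  "negbeta_Fin \<beta> l = {x. l \<le> x \<and> x < l + 1 \<and>
      (\<exists>N\<ge>1. \<forall>i\<ge>N. negbeta_digit \<beta> l x i = 0)}"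

end

theory Submission
  imports Defs
begin

lemma T_range:
  "l \<le> negbeta_T b l x \<and> negbeta_T b l x < l + 1"
proof -
  let ?z = "- b * x - l"
  have "negbeta_T b l x = ?z - of_int \<lfloor>?z\<rfloor> + l" unfolding negbeta_T_def by simp
  moreover have "of_int \<lfloor>?z\<rfloor> \<le> ?z" "?z < of_int \<lfloor>?z\<rfloor> + 1" by linarith+
  ultimately show ?thesis by linarith
qed

lemma T_zero:
  assumes "-1 < l" "l \<le> 0"
  shows "negbeta_T b l 0 = 0"
proof -
  have "\<lfloor>- l\<rfloor> = 0" using assms by (simp add: floor_eq_iff)
  thus ?thesis unfolding negbeta_T_def by simp
qed

lemma iter_zero:
  assumes "-1 < l" "l \<le> 0"
  shows "(negbeta_T b l ^^ n) 0 = 0"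
  by (induction n) (simp_all add: T_zero[OF assms])

lemma iter_range:
  assumes "l \<le> x" "x < l + 1"
  shows "l \<le> (negbeta_T b l ^^ n) x \<and> (negbeta_T b l ^^ n) x < l + 1"
  using assms by (cases n) (simp_all add: T_range)

lemma in_Fin:
  assumes "-1 < l" "l \<le> 0" "l \<le> y" "y < l + 1" "negbeta_T b l y = 0"
  shows "y \<in> negbeta_Fin b l"
proof -
  have "\<forall>i\<ge>2. negbeta_digit b l y i = 0"
  proof (intro allI impI)
    fix i :: nat assume "2 \<le> i"
    define k where "k = i - 2"
    have k: "i - 1 = Suc k" using \<open>2 \<le> i\<close> unfolding k_def by simp
    have "(negbeta_T b l ^^ (i - 1)) y = (negbeta_T b l ^^ k) 0"
      unfolding k by (simp only: funpow_Suc_right o_apply assms(5))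
    also have "\<dots> = 0" using iter_zero[OF assms(1,2)] .
    finally show "negbeta_digit b l y i = 0" unfolding negbeta_digit_def
      using assms(1,2) by (simp add: floor_eq_iff)
  qed
  thus ?thesis unfolding negbeta_Fin_def using assms(3,4)
    by (intro CollectI conjI) (auto intro!: exI[of _ 2])
qed

lemma zero_in_Fin:
  assumes "-1 < l" "l \<le> 0"
  shows "0 \<in> negbeta_Fin b l"
  using in_Fin[OF assms] assms T_zero[OF assms] by simp

theorem mainTheorem1:
  fixes \<beta> l :: real
  assumes "\<beta> > 1" and "-1 < l" and "l \<le> 0"
  shows "negbeta_Fin \<beta> l \<noteq> {0} \<longleftrightarrow>
    ((l \<le> -1/\<beta> \<and> -1/\<beta> < l + 1) \<or> (l \<le> 1/\<beta> \<and> 1/\<beta> < l + 1))"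
proof
  let ?T = "negbeta_T \<beta> l"
  assume "negbeta_Fin \<beta> l \<noteq> {0}"
  then obtain x where xF: "x \<in> negbeta_Fin \<beta> l" and x0: "x \<noteq> 0"
    using zero_in_Fin[OF assms(2,3)] by blast
  from xF obtain N where N: "N \<ge> 1" "\<forall>i\<ge>N. negbeta_digit \<beta> l x i = 0"
    and xr: "l \<le> x" "x < l + 1"
    unfolding negbeta_Fin_def by blast
  have step: "(?T ^^ i) x = - \<beta> * (?T ^^ (i - 1)) x" if "i \<ge> N" for i
  proof -
    have "i = Suc (i - 1)" using that N(1) by simp
    hence "(?T ^^ i) x = ?T ((?T ^^ (i - 1)) x)" by (metis funpow.simps(2) o_apply)
    thus ?thesis using N(2) that unfolding negbeta_T_def negbeta_digit_def by simp
  qed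
  define y where "y = (?T ^^ (N - 1)) x"
  have pw: "(?T ^^ (N - 1 + k)) x = (- \<beta>) ^ k * y" for k
  proof (induction k)
    case 0 show ?case by (simp add: y_def)
  next
    case (Suc k)
    have "(?T ^^ (N - 1 + Suc k)) x = - \<beta> * (?T ^^ (N - 1 + k)) x"
      using step[of "N - 1 + Suc k"] N(1) by simp
    thus ?case using Suc by simp
  qed
  have y0: "y = 0"
  proof (rule ccontr)
    assume "y \<noteq> 0"
    hence "\<bar>y\<bar> > 0" by simp
    obtain k where k: "2 / \<bar>y\<bar> < \<beta> ^ k" using real_arch_pow[OF assms(1)] by blast
    hence "2 < \<beta> ^ k * \<bar>y\<bar>" using \<open>\<bar>y\<bar> > 0\<close> by (simp add: field_simps)
    moreover have "\<bar>(?T ^^ (N - 1 + k)) x\<bar> = \<beta> ^ k * \<bar>y\<bar>"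
      using pw[of k] assms(1) by (simp add: abs_mult power_abs)
    moreover have "\<bar>(?T ^^ (N - 1 + k)) x\<bar> < 2"
      using iter_range[OF xr, where b=\<beta> and n="N - 1 + k"] assms by auto
    ultimately show False by linarith
  qed
  have "\<exists>m. (?T ^^ m) x \<noteq> 0 \<and> (?T ^^ Suc m) x = 0"
  proof (rule ccontr)
    assume H: "\<not> ?thesis"
    have "(?T ^^ n) x \<noteq> 0" for n
      by (induction n) (use x0 H in auto)
    thus False using y0 unfolding y_def by blast
  qed
  then obtain m where m: "(?T ^^ m) x \<noteq> 0" "?T ((?T ^^ m) x) = 0" by auto
  define z where "z = (?T ^^ m) x"
  have zr: "l \<le> z" "z < l + 1" using iter_range[OF xr] z_def by auto
  define k where "k = \<lfloor>- \<beta> * z - l\<rfloor>"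
  have zk: "- \<beta> * z = of_int k" using m(2) unfolding z_def[symmetric] k_def negbeta_T_def by simp
  have zne: "z \<noteq> 0" using m(1) z_def by simp
  have zeq: "z = - of_int k / \<beta>" using zk assms(1) by (simp add: field_simps)
  show "((l \<le> -1/\<beta> \<and> -1/\<beta> < l + 1) \<or> (l \<le> 1/\<beta> \<and> 1/\<beta> < l + 1))"
  proof (cases "k > 0")
    case True
    hence "of_int k \<ge> (1::real)" by simp
    hence "(- of_int k)/\<beta> \<le> -1/\<beta>" using assms(1) by (intro divide_right_mono) auto
    hence "z \<le> -1/\<beta>" using zeq by simp
    moreover have "-1/\<beta> < l + 1" proof - have "0 < 1/\<beta>" using assms(1) by simp thus ?thesis using assms by linarith qed
    ultimately show ?thesis using zr by auto
  next
    case False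
    hence "k < 0" using zne zeq by (cases "k = 0") auto
    hence "- of_int k \<ge> (1::real)" by simp
    hence "1/\<beta> \<le> (- of_int k)/\<beta>" using assms(1) by (intro divide_right_mono) auto
    hence "1/\<beta> \<le> z" using zeq by simp
    moreover have "l \<le> 1/\<beta>" proof - have "0 < 1/\<beta>" using assms(1) by simp thus ?thesis using assms by linarith qed
    ultimately show ?thesis using zr by auto
  qed
next
  let ?T = "negbeta_T \<beta> l"
  assume H: "((l \<le> -1/\<beta> \<and> -1/\<beta> < l + 1) \<or> (l \<le> 1/\<beta> \<and> 1/\<beta> < l + 1))"
  show "negbeta_Fin \<beta> l \<noteq> {0}"
  proof
    assume E: "negbeta_Fin \<beta> l = {0}"
    from H show False
    proof
      assume h: "l \<le> -1/\<beta> \<and> -1/\<beta> < l + 1"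
      have "\<lfloor>1 - l\<rfloor> = 1" using assms by (simp add: floor_eq_iff)
      hence "?T (-1/\<beta>) = 0" unfolding negbeta_T_def using assms(1) by simp
      hence "-1/\<beta> \<in> negbeta_Fin \<beta> l" using in_Fin[OF assms(2,3)] h by blast
      thus False using E assms(1) by simp
    next
      assume h: "l \<le> 1/\<beta> \<and> 1/\<beta> < l + 1"
      have "\<lfloor>-1 - l\<rfloor> = -1" using assms by (simp add: floor_eq_iff)
      hence "?T (1/\<beta>) = 0" unfolding negbeta_T_def using assms(1) by simp
      hence "1/\<beta> \<in> negbeta_Fin \<beta> l" using in_Fin[OF assms(2,3)] h by blast
      thus False using E assms(1) by simp
    qed
  qed
qed

end
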